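(* Let $m\le n$ be nonnegative integers and $\delta=(\delta_1,\dots,\delta_m)\in\mathbb N^m$. Then every highest weight vertex $b=b_1\otimes\cdots\otimes b_m$ of the $C_n$-crystal $B^{C_n}_\delta=B^{C_n}_{\delta_1}\otimes\cdots\otimes B^{C_n}_{\delta_m}$ contains only letters from the set $\{1,2,\dots,m,\overline{m-1},\overline{m-2},\dots,\overline{1}\}$ (i.e., every letter of every word $b_j$ lies in this set).
   Context: The crystal $B_1^{C_n}$ of the vector representation of $U_q(\mathfrak{sp}_{2n})$ has vertices $1,\dots,n,\overline n,\dots,\overline1$, weights $\mathrm{wt}(i)=\varepsilon_i$, $\mathrm{wt}(\overline i)=-\varepsilon_i$, and arrows $i\xrightarrow{i}i+1$, $\overline{i+1}\xrightarrow{i}\overline i$ for $1\le i<n$, $n\xrightarrow{n}\overline n$. $B^{C_n}_s$ is the Kashiwara–Nakashima crystal $B(s\omega_1)$, whose vertices are labelled by the weakly decreasing words $x_1x_2\cdots x_s$ ($x_1\ge\cdots\ge x_s$) in the ordered alphabet $1<2<\cdots<n<\overline n<\cdots<\overline1$; $B_0$ has one vertex (the empty word). Tensor products use the rule $\tilde f_i(b\otimes b')=\tilde f_ib\otimes b'$ if $\varphi_i(b)>\varepsilon_i(b')$ and $b\otimes\tilde f_ib'$ otherwise; $\tilde e_i(b\otimes b')=\tilde e_ib\otimes b'$ if $\varphi_i(b)\ge\varepsilon_i(b')$ and $b\otimes\tilde e_ib'$ otherwise. A highest weight vertex is one with $\varepsilon_i(b)=0$ for all $i\in\{1,\dots,n\}$.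 *)

theory Defs
  imports Main
begin

text \<open>Letters of the C_n alphabet, encoded as integers: the letter i is the integer i
  and the letter bar-i is the integer -i (1 <= i <= n).\<close>

definition letters :: "nat \<Rightarrow> int set" where
  "letters n = {x. 1 \<le> \<bar>x\<bar> \<and> \<bar>x\<bar> \<le> int n}"

text \<open>Position in the order 1 < 2 < ... < n < bar n < ... < bar 1.\<close>
definition lkey :: "nat \<Rightarrow> int \<Rightarrow> int" where
  "lkey n x = (if x > 0 then x else 2 * int n + 1 + x)"

text \<open>Crystal B_1 of the vector representation: arrows i -> i+1 and bar(i+1) -> bar i
  with colour i (1 <= i < n), and n -> bar n with colour n.\<close>

definition f1 :: "nat \<Rightarrow> nat \<Rightarrow> int \<Rightarrow> int option" where
  "f1 n i x =
     (if 1 \<le> i \<and> i < n \<and> x = int i then Some (int i + 1)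
      else if 1 \<le> i \<and> i < n \<and> x = - (int i + 1) then Some (- int i)
      else if i = n \<and> 1 \<le> n \<and> x = int n then Some (- int n)
      else None)"

definition e1 :: "nat \<Rightarrow> nat \<Rightarrow> int \<Rightarrow> int option" where
  "e1 n i x =
     (if 1 \<le> i \<and> i < n \<and> x = int i + 1 then Some (int i)
      else if 1 \<le> i \<and> i < n \<and> x = - int i then Some (- (int i + 1))
      else if i = n \<and> 1 \<le> n \<and> x = - int n then Some (int n)
      else None)"

definition eps1 :: "nat \<Rightarrow> nat \<Rightarrow> int \<Rightarrow> int" where
  "eps1 n i x = (if e1 n i x = None then 0 else 1)"

definition phi1 :: "nat \<Rightarrow> nat \<Rightarrow> int \<Rightarrow> int" where
  "phi1 n i x = (if f1 n i x = None then 0 else 1)"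

text \<open>Tensor powers of B_1: the list [x1,...,xN] is x1 \<otimes> (x2 \<otimes> (... \<otimes> xN)),
  the empty list being the unique element of the trivial crystal.  Kashiwara's
  tensor product rule (as in the paper) together with the usual formulas for
  epsilon and phi of a tensor product.\<close>

fun epsT :: "nat \<Rightarrow> nat \<Rightarrow> int list \<Rightarrow> int"
and phiT :: "nat \<Rightarrow> nat \<Rightarrow> int list \<Rightarrow> int" where
  "epsT n i [] = 0"
| "epsT n i (x # w) =
     max (eps1 n i x) (epsT n i w - (phi1 n i x - eps1 n i x))"
| "phiT n i [] = 0"
| "phiT n i (x # w) =
     max (phiT n i w) (phi1 n i x + (phiT n i w - epsT n i w))"

fun eT :: "nat \<Rightarrow> nat \<Rightarrow> int list \<Rightarrow> int list option" where
  "eT n i [] = None"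
| "eT n i (x # w) =
     (if phi1 n i x \<ge> epsT n i w then map_option (\<lambda>y. y # w) (e1 n i x)
      else map_option (\<lambda>v. x # v) (eT n i w))"

fun fT :: "nat \<Rightarrow> nat \<Rightarrow> int list \<Rightarrow> int list option" where
  "fT n i [] = None"
| "fT n i (x # w) =
     (if phi1 n i x > epsT n i w then map_option (\<lambda>y. y # w) (f1 n i x)
      else map_option (\<lambda>v. x # v) (fT n i w))"

text \<open>The Kashiwara--Nakashima row crystal B_s = B(s omega_1): weakly decreasing
  words x1 >= ... >= xs, realised inside B_1^{\<otimes> s} via x1 \<otimes> ... \<otimes> xs.\<close>

definition row :: "nat \<Rightarrow> nat \<Rightarrow> int list set" where
  "row n s = {w. length w = s \<and> set w \<subseteq> letters n
                 \<and> sorted_wrt (\<lambda>a b. lkey n b \<le> lkey n a) w}"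

text \<open>An element b1 \<otimes> ... \<otimes> bm of B_{delta_1} \<otimes> ... \<otimes> B_{delta_m} is given by the list
  [b1,...,bm]; by associativity of the tensor product its crystal data are those of
  the concatenated word in B_1^{\<otimes> N}.\<close>

definition tensor_elem :: "nat \<Rightarrow> nat list \<Rightarrow> int list list \<Rightarrow> bool" where
  "tensor_elem n \<delta> b \<longleftrightarrow> length b = length \<delta> \<and> (\<forall>j<length \<delta>. b ! j \<in> row n (\<delta> ! j))"

definition highest_weight :: "nat \<Rightarrow> int list list \<Rightarrow> bool" where
  "highest_weight n b \<longleftrightarrow> (\<forall>i\<in>{1..n}. epsT n i (concat b) = 0)"

end

theory Submission
  imports Defs
begin

definition lev :: "int \<Rightarrow> int" where
  "lev x = (if x > 0 then x else 1 - x)"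

lemma eps1_ge0: "eps1 n i x \<ge> 0" by (simp add: eps1_def)
lemma phi1_ge0: "phi1 n i x \<ge> 0" by (simp add: phi1_def)

lemma epsT_ge0: "epsT n i w \<ge> 0"
  by (induction w) (auto simp: eps1_ge0 intro: max.coboundedI1)

lemma epsT_prefix: "epsT n i u \<le> epsT n i (u @ v)"
proof (induction u)
  case Nil thus ?case using epsT_ge0[of n i v] by simp
next
  case (Cons x u) thus ?case by (simp only: append_Cons epsT.simps)
qed

lemma epsT_noplus:
  assumes "\<forall>y\<in>set u. f1 n i y = None"
  shows "epsT n i w \<le> epsT n i (u @ w)"
  using assms
proof (induction u)
  case Nil thus ?case by simp
next
  case (Cons y u)
  hence "phi1 n i y = 0" by (simp add: phi1_def)
  thus ?case using Cons eps1_ge0[of n i y] by (simp add: le_max_iff_disj)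
qed

lemma exists_plus:
  assumes "epsT n i (u @ x # v) = 0" and "e1 n i x \<noteq> None"
  shows "\<exists>y\<in>set u. f1 n i y \<noteq> None"
proof (rule ccontr)
  assume "\<not> ?thesis"
  hence "epsT n i (x # v) \<le> epsT n i (u @ x # v)" using epsT_noplus by blast
  moreover have "epsT n i (x # v) \<ge> eps1 n i x" by simp
  moreover have "eps1 n i x = 1" using assms(2) by (simp add: eps1_def)
  ultimately show False using assms(1) by simp
qed

lemma step:
  assumes L0: "L \<ge> (0::int)" and x: "x \<in> letters n"
    and H: "\<forall>i\<in>{1..n}. e1 n i x \<noteq> None \<longrightarrow>
      (\<exists>y. f1 n i y \<noteq> None \<and> (lev y \<le> L \<or> (lev y \<le> L + 1 \<and> lkey n x \<le> lkey n y)))"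
  shows "lev x \<le> L + 1"
proof -
  have L0: "L \<ge> 0" by (rule L0)
  consider (one) "x = 1" | (up) "x \<ge> 2" "x \<le> int n" | (bar) "x \<le> -1" "x > - int n" | (barn) "x = - int n"
  proof -
    have "x = 1 \<or> (x \<ge> 2 \<and> x \<le> int n) \<or> (x \<le> -1 \<and> x > - int n) \<or> x = - int n"
      using x unfolding letters_def by (simp add: abs_if split: if_splits; arith)
    thus ?thesis using that by blast
  qed
  then show ?thesis
  proof cases
    case one
    thus ?thesis using L0 by (simp add: lev_def)
  next
    case up
    define i where "i = nat (x - 1)"
    have i: "1 \<le> i" "i < n" "x = int i + 1" using up unfolding i_def by auto
    hence "e1 n i x \<noteq> None" by (simp add: e1_def)
    then obtain y where y: "f1 n i y \<noteq> None" "lev y \<le> L \<or> (lev y \<le> L + 1 \<and> lkey n x \<le> lkey n y)"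
      using H i(1,2) by force
    hence "y = int i \<or> y = - (int i + 1)" by (auto simp: f1_def split: if_splits)
    thus ?thesis using y i by (auto simp: lev_def lkey_def)
  next
    case bar
    define i where "i = nat (- x)"
    have i: "1 \<le> i" "i < n" "x = - int i" using bar unfolding i_def by auto
    hence "e1 n i x \<noteq> None" by (simp add: e1_def)
    then obtain y where y: "f1 n i y \<noteq> None" "lev y \<le> L \<or> (lev y \<le> L + 1 \<and> lkey n x \<le> lkey n y)"
      using H i(1,2) by force
    hence "y = int i \<or> y = - (int i + 1)" using i by (auto simp: f1_def split: if_splits)
    thus ?thesis using y i by (auto simp: lev_def lkey_def)
  next
    case barn
    have n1: "1 \<le> n" using x unfolding letters_def barn by simp
    hence "e1 n n x \<noteq> None" using barn by (simp add: e1_def)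
    then obtain y where y: "f1 n n y \<noteq> None" "lev y \<le> L \<or> (lev y \<le> L + 1 \<and> lkey n x \<le> lkey n y)"
      using H n1 by force
    hence "y = int n" by (auto simp: f1_def split: if_splits)
    thus ?thesis using y barn n1 by (auto simp: lev_def lkey_def)
  qed
qed

lemma main:
  assumes "\<forall>w\<in>set bs. set w \<subseteq> letters n \<and> sorted_wrt (\<lambda>a b. lkey n b \<le> lkey n a) w"
    and "\<forall>i\<in>{1..n}. epsT n i (concat bs) = 0"
  shows "\<forall>j<length bs. \<forall>x\<in>set (bs!j). lev x \<le> int j + 1"
  using assms
proof (induction bs rule: rev_induct)
  case Nil thus ?case by simp
next
  case (snoc w bs)
  have hw0: "\<forall>i\<in>{1..n}. epsT n i (concat bs) = 0"
  proof
    fix i assume i: "i \<in> {1..n}"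
    have "epsT n i (concat bs) \<le> epsT n i (concat bs @ w)" by (rule epsT_prefix)
    thus "epsT n i (concat bs) = 0" using snoc.prems(2) i epsT_ge0[of n i "concat bs"] by simp
  qed
  have IH: "\<forall>j<length bs. \<forall>x\<in>set (bs!j). lev x \<le> int j + 1"
    using snoc.IH snoc.prems(1) hw0 by simp
  define L where "L = int (length bs)"
  have old: "\<forall>y\<in>set (concat bs). lev y \<le> L"
  proof
    fix y assume "y \<in> set (concat bs)"
    then obtain v where v: "v \<in> set bs" "y \<in> set v" by auto
    then obtain j where j: "j < length bs" "bs ! j = v" by (auto simp: in_set_conv_nth)
    thus "lev y \<le> L" using IH v unfolding L_def by fastforce
  qed
  have wl: "set w \<subseteq> letters n" and ws: "sorted_wrt (\<lambda>a b. lkey n b \<le> lkey n a) w"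
    using snoc.prems(1) by auto
  have new: "\<forall>p. p < length w \<longrightarrow> lev (w!p) \<le> L + 1"
  proof
    fix p show "p < length w \<longrightarrow> lev (w!p) \<le> L + 1"
    proof (induction p rule: less_induct)
      case (less p)
      show ?case
      proof
        assume p: "p < length w"
        have W: "concat (bs @ [w]) = (concat bs @ take p w) @ (w!p) # drop (Suc p) w"
          using p by (simp add: id_take_nth_drop[symmetric])
        show "lev (w!p) \<le> L + 1"
        proof (rule step[of L])
          show "L \<ge> 0" unfolding L_def by simp
          show "w ! p \<in> letters n" using wl p by auto
          show "\<forall>i\<in>{1..n}. e1 n i (w ! p) \<noteq> None \<longrightarrow>
            (\<exists>y. f1 n i y \<noteq> None \<and> (lev y \<le> L \<or> (lev y \<le> L + 1 \<and> lkey n (w!p) \<le> lkey n y)))"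
          proof (intro ballI impI)
            fix i assume i: "i \<in> {1..n}" and e: "e1 n i (w ! p) \<noteq> None"
            have "epsT n i ((concat bs @ take p w) @ (w!p) # drop (Suc p) w) = 0"
              using snoc.prems(2) i W by simp
            then obtain y where y: "y \<in> set (concat bs @ take p w)" "f1 n i y \<noteq> None"
              using exists_plus[OF _ e] by blast
            show "\<exists>y. f1 n i y \<noteq> None \<and> (lev y \<le> L \<or> (lev y \<le> L + 1 \<and> lkey n (w!p) \<le> lkey n y))"
            proof (cases "y \<in> set (concat bs)")
              case True thus ?thesis using y old by blast
            next
              case False
              hence "y \<in> set (take p w)" using y by simp
              then obtain q where q: "q < p" "y = w ! q" using p
                by (auto simp: in_set_conv_nth)
              have "lev y \<le> L + 1" using less.IH[OF q(1)] q p by simp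
              moreover have "lkey n (w!p) \<le> lkey n y"
                using ws q p by (simp add: sorted_wrt_iff_nth_less)
              ultimately show ?thesis using y by blast
            qed
          qed
        qed
      qed
    qed
  qed
  show ?case
  proof (intro allI impI ballI)
    fix j x assume j: "j < length (bs @ [w])" and x: "x \<in> set ((bs @ [w]) ! j)"
    show "lev x \<le> int j + 1"
    proof (cases "j < length bs")
      case True thus ?thesis using IH x by (simp add: nth_append)
    next
      case False
      hence "j = length bs" using j by simp
      hence "x \<in> set w" using x by simp
      then obtain p where "p < length w" "x = w ! p" by (auto simp: in_set_conv_nth)
      thus ?thesis using new \<open>j = length bs\<close> unfolding L_def by simp
    qed
  qed
qed

theorem lemma25:
  fixes m n :: nat and \<delta> :: "nat list" and b :: "int list list"
  assumes "m \<le> n"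
    and "length \<delta> = m"
    and "tensor_elem n \<delta> b"
    and "highest_weight n b"
  shows "\<forall>j<m. \<forall>x\<in>set (b ! j).
           (1 \<le> x \<and> x \<le> int m) \<or> (- (int m - 1) \<le> x \<and> x \<le> -1)"
proof (intro allI impI ballI)
  fix j x assume j: "j < m" and x: "x \<in> set (b ! j)"
  have lb: "length b = m" using assms(2,3) unfolding tensor_elem_def by simp
  have rows: "\<forall>w\<in>set b. set w \<subseteq> letters n \<and> sorted_wrt (\<lambda>a b. lkey n b \<le> lkey n a) w"
  proof
    fix w assume "w \<in> set b"
    then obtain k where "k < length b" "w = b ! k" by (auto simp: in_set_conv_nth)
    thus "set w \<subseteq> letters n \<and> sorted_wrt (\<lambda>a b. lkey n b \<le> lkey n a) w"
      using assms(3) unfolding tensor_elem_def row_def by auto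
  qed
  have "lev x \<le> int j + 1"
    using main[OF rows] assms(4) j x lb unfolding highest_weight_def by auto
  moreover have "x \<in> letters n" using rows x j lb by (meson nth_mem subsetD)
  ultimately show "(1 \<le> x \<and> x \<le> int m) \<or> (- (int m - 1) \<le> x \<and> x \<le> -1)"
    using j unfolding lev_def letters_def by (auto split: if_splits)
qed

end
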